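(* For every integer $L\geq 0$, \[ \sum_{j=-\infty}^{\infty} q^{\binom{j-1}{2}} \left(\frac{j}{3}\right) {2L+1 \brack L+j}_q = q^L\,\frac{(-1;q^3)_L}{(-1;q)_L}\,\bigl(1+q-q^{L+1}\bigr), \] where $\binom{j-1}{2}=\frac{(j-1)(j-2)}{2}$.
   Context: For a variable $a$ and integer $n\ge 0$, $(a;q)_n=(1-a)(1-aq)\cdots(1-aq^{n-1})$ (with $(a;q)_0=1$). The $q$-binomial coefficient is ${A \brack B}_q=\frac{(q;q)_A}{(q;q)_B(q;q)_{A-B}}$ if $0\le B\le A$ are integers, and $0$ otherwise. $\left(\frac{j}{3}\right)$ is the Legendre symbol modulo 3: it equals $1$ if $j\equiv 1 \pmod 3$, $-1$ if $j\equiv -1\pmod 3$, and $0$ if $3\mid j$. *)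

theory Defs
  imports "HOL-Computational_Algebra.Formal_Power_Series" "HOL-Number_Theory.Number_Theory"
begin

definition qpoch :: "'a::comm_ring_1 \<Rightarrow> 'a \<Rightarrow> nat \<Rightarrow> 'a" where
  "qpoch a q n = (\<Prod>k<n. 1 - a * q ^ k)"

definition qbinom :: "'a::field fps \<Rightarrow> int \<Rightarrow> int \<Rightarrow> 'a fps" where
  "qbinom q A B = (if 0 \<le> B \<and> B \<le> A
      then qpoch q q (nat A) / (qpoch q q (nat B) * qpoch q q (nat (A - B)))
      else 0)"

end

theory Submission
  imports Defs
begin

unbundle fps_syntax

abbreviation qp :: "nat \<Rightarrow> rat fps" where
  "qp n \<equiv> qpoch fps_X fps_X n"

abbreviation qb :: "int \<Rightarrow> int \<Rightarrow> rat fps" where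
  "qb A B \<equiv> qbinom fps_X A B"

lemma qpoch_Suc: "qpoch a q (Suc n) = qpoch a q n * (1 - a * q ^ n)"
  by (simp add: qpoch_def)

lemma qp_nth0: "qp n $ 0 = 1"
  by (induction n) (simp_all add: qpoch_def)

lemma qp_nz: "qp n \<noteq> 0"
  using qp_nth0[of n] by auto

lemma qb_out: "B < 0 \<or> A < B \<Longrightarrow> qb A B = 0"
  by (auto simp: qbinom_def)

lemma qb_mult:
  assumes "k \<le> n"
  shows "qb (int n) (int k) * (qp k * qp (n - k)) = qp n"
proof -
  have h: "(qp k * qp (n - k)) $ 0 = 1" by (simp add: qp_nth0)
  have "qb (int n) (int k) = qp n / (qp k * qp (n - k))"
    using assms by (simp add: qbinom_def nat_diff_distrib)
  also have "\<dots> = qp n * inverse (qp k * qp (n - k))"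
    using h by (simp add: fps_divide_unit)
  finally show ?thesis
    using h by (simp add: mult.assoc inverse_mult_eq_1)
qed

lemma qp0: "qpoch a q 0 = 1"
  by (simp add: qpoch_def)

lemma qb_n0: "qb (int n) 0 = 1"
proof -
  have "qb (int n) 0 * qp n = 1 * qp n" using qb_mult[of 0 n] by (simp add: qp0)
  then show ?thesis using qp_nz[of n] by (metis mult_right_cancel)
qed

lemma qb_nn: "qb (int n) (int n) = 1"
proof -
  have "qb (int n) (int n) * qp n = 1 * qp n" using qb_mult[of n n] by (simp add: qp0)
  then show ?thesis using qp_nz[of n] by (metis mult_right_cancel)
qed

lemma qb_sym: "0 \<le> n \<Longrightarrow> qb n k = qb n (n - k)"
  by (auto simp: qbinom_def mult.commute)

lemma pascal_nat:
  assumes "m < n"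
  shows "qb (int n + 1) (int m + 1) = qb (int n) (int m) + fps_X ^ (m+1) * qb (int n) (int m + 1)"
proof -
  define D where "D = qp (m+1) * qp (n - m)"
  have Dnz: "D \<noteq> 0" unfolding D_def using qp_nz by simp
  have L: "qb (int n + 1) (int m + 1) * D = qp (n+1)"
    using qb_mult[of "m+1" "n+1"] assms unfolding D_def by (simp add: add.commute)
  have e1: "qp (m+1) = qp m * (1 - fps_X ^ (m+1))"
    by (simp add: qpoch_Suc)
  have e2: "qp (n - m) = qp (n - (m+1)) * (1 - fps_X ^ (n - m))"
  proof -
    have s: "n - m = Suc (n - (m+1))" using assms by simp
    show ?thesis unfolding s by (simp add: qpoch_Suc)
  qed
  have r1: "qb (int n) (int m) * D = qp n * (1 - fps_X ^ (m+1))"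
  proof -
    have "qb (int n) (int m) * D = (qb (int n) (int m) * (qp m * qp (n - m))) * (1 - fps_X ^ (m+1))"
      unfolding D_def e1 by (simp add: ac_simps)
    also have "\<dots> = qp n * (1 - fps_X ^ (m+1))" using qb_mult[of m n] assms by simp
    finally show ?thesis .
  qed
  have r2: "qb (int n) (int m + 1) * D = qp n * (1 - fps_X ^ (n - m))"
  proof -
    have "qb (int n) (int m + 1) * D = (qb (int (n)) (int (m+1)) * (qp (m+1) * qp (n - (m+1)))) * (1 - fps_X ^ (n - m))"
      unfolding D_def by (subst e2) (simp add: ac_simps)
    also have "\<dots> = qp n * (1 - fps_X ^ (n - m))" using qb_mult[of "m+1" n] assms by simp
    finally show ?thesis .
  qed
  have pw: "(fps_X::rat fps) ^ (m+1) * fps_X ^ (n - m) = fps_X ^ (n+1)"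
    using assms by (simp add: power_add[symmetric])
  have "(qb (int n) (int m) + fps_X ^ (m+1) * qb (int n) (int m + 1)) * D
        = qp n * (1 - fps_X ^ (m+1)) + fps_X ^ (m+1) * (qp n * (1 - fps_X ^ (n - m)))"
    using r1 r2 by (simp add: distrib_right mult.assoc)
  also have "\<dots> = qp n * (1 - fps_X ^ (m+1) * fps_X ^ (n - m))"
    by (simp add: algebra_simps)
  also have "\<dots> = qp (n+1)" using pw by (simp add: qpoch_Suc)
  finally have "(qb (int n) (int m) + fps_X ^ (m+1) * qb (int n) (int m + 1)) * D = qb (int n + 1) (int m + 1) * D"
    using L by simp
  then show ?thesis using Dnz by simp
qed

lemma pascal1: "qb (int n + 1) k = qb (int n) (k-1) + fps_X ^ nat k * qb (int n) k"
proof -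
  consider "k < 0" | "k = 0" | "k = int n + 1" | "k > int n + 1" | "1 \<le> k \<and> k \<le> int n" by linarith
  then show ?thesis
  proof cases
    case 1 then show ?thesis by (simp add: qb_out)
  next
    case 2
    have e: "int (Suc n) = int n + 1" by simp
    show ?thesis using 2 qb_n0[of "Suc n", unfolded e] qb_n0[of n] by (simp add: qb_out)
  next
    case 3
    have e: "int (Suc n) = int n + 1" by simp
    show ?thesis using 3 qb_nn[of "Suc n", unfolded e] qb_nn[of n] by (simp add: qb_out)
  next
    case 4 then show ?thesis by (simp add: qb_out)
  next
    case 5
    define m where "m = nat (k - 1)"
    have m: "k = int m + 1" "m < n" using 5 unfolding m_def by auto
    have "nat k = m + 1" using m by simp
    then show ?thesis using pascal_nat[OF m(2)] m by simp
  qed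
qed

lemma pascal2: "qb (int n + 1) k = qb (int n) k + fps_X ^ nat (int n + 1 - k) * qb (int n) (k-1)"
proof -
  have "qb (int n + 1) (int n + 1 - k) = qb (int n) (int n + 1 - k - 1) + fps_X ^ nat (int n + 1 - k) * qb (int n) (int n + 1 - k)"
    by (rule pascal1)
  moreover have "qb (int n + 1) (int n + 1 - k) = qb (int n + 1) k" using qb_sym[of "int n + 1" k] by simp
  moreover have "qb (int n) (int n + 1 - k - 1) = qb (int n) k" using qb_sym[of "int n" k] by simp
  moreover have "qb (int n) (int n + 1 - k) = qb (int n) (k - 1)"
  proof -
    have e: "int n - (k - 1) = int n + 1 - k" by simp
    show ?thesis by (metis qb_sym[of "int n" "k-1"] e of_nat_0_le_iff)
  qed
  ultimately show ?thesis by simp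
qed

lemma dpascal: "qb (int n + 2) (k+1) = fps_X ^ nat (k+1) * qb (int n) (k+1)
   + (1 + fps_X ^ (n+1)) * qb (int n) k + fps_X ^ nat (int n + 1 - k) * qb (int n) (k-1)"
proof -
  have a: "qb (int n + 2) (k+1) = qb (int n + 1) k + fps_X ^ nat (k+1) * qb (int n + 1) (k+1)"
    proof -
    have e: "int (n+1) + 1 = int n + 2" "int (n+1) = int n + 1" "k + 1 - 1 = k" by simp_all
    show ?thesis using pascal1[of "n+1" "k+1"] unfolding e by (simp only: one_add_one add.assoc)
  qed
  have b: "qb (int n + 1) k = qb (int n) k + fps_X ^ nat (int n + 1 - k) * qb (int n) (k-1)"
    by (rule pascal2)
  have c: "qb (int n + 1) (k+1) = qb (int n) (k+1) + fps_X ^ nat (int n - k) * qb (int n) k"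
    using pascal2[of n "k+1"] by simp
  have d: "fps_X ^ nat (k+1) * (fps_X ^ nat (int n - k) * qb (int n) k) = fps_X ^ (n+1) * qb (int n) k"
  proof (cases "0 \<le> k \<and> k \<le> int n")
    case True
    then have "nat (k+1) + nat (int n - k) = n + 1" by linarith
    then show ?thesis by (metis mult.assoc power_add)
  next
    case False then show ?thesis by (auto simp: qb_out)
  qed
  show ?thesis using d unfolding a b c by (simp add: algebra_simps)
qed

definition ee :: "int \<Rightarrow> int" where "ee j = (j-1)*(j-2) div 2"

lemma ee_nonneg: "0 \<le> ee j"
proof -
  have "0 \<le> (j-1)*(j-2)"
  proof (cases "j \<le> 1")
    case True then show ?thesis by (intro mult_nonpos_nonpos) auto
  next
    case False then show ?thesis by (intro mult_nonneg_nonneg) auto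
  qed
  then show ?thesis unfolding ee_def by simp
qed

lemma ee_succ: "ee (j+1) = ee j + (j - 1)"
proof -
  have "(j+1-1)*(j+1-2) = (j-1)*(j-2) + (j-1)*2" by (simp add: algebra_simps)
  then show ?thesis unfolding ee_def by simp
qed

definition F :: "nat \<Rightarrow> int \<Rightarrow> rat fps" where
  "F L j = fps_X ^ nat (ee j) * qb (2 * int L + 1) (int L + j)"

lemma F_zero: "j < - int L \<or> j > int L + 1 \<Longrightarrow> F L j = 0"
  unfolding F_def by (auto simp: qb_out)

lemma pow_comb: "0 \<le> a \<Longrightarrow> 0 \<le> b \<Longrightarrow> nat a + nat b = c \<Longrightarrow>
   (fps_X::rat fps) ^ nat a * fps_X ^ nat b = fps_X ^ c"
  by (simp add: power_add[symmetric])

lemma F_rec: "F (Suc L) j = fps_X ^ (L+2) * F L (j+1) + (1 + fps_X^(2*L+2)) * F L j + fps_X ^ L * F L (j-1)"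
proof -
  define n where "n = 2*L+1"
  define k where "k = int L + j"
  have nn: "int n = 2 * int L + 1" unfolding n_def by simp
  have D: "qb (int n + 2) (k+1) = fps_X ^ nat (k+1) * qb (int n) (k+1)
   + (1 + fps_X ^ (n+1)) * qb (int n) k + fps_X ^ nat (int n + 1 - k) * qb (int n) (k-1)"
    by (rule dpascal)
  have lhs: "F (Suc L) j = fps_X ^ nat (ee j) * qb (int n + 2) (k+1)"
    unfolding F_def n_def k_def by (simp add: algebra_simps)
  have t1: "fps_X ^ nat (ee j) * (fps_X ^ nat (k+1) * qb (int n) (k+1)) = fps_X ^ (L+2) * F L (j+1)"
  proof (cases "0 \<le> k + 1")
    case True
    have "nat (ee j) + nat (k+1) = L + 2 + nat (ee (j+1))"
      using True ee_succ[of j] ee_nonneg[of j] ee_nonneg[of "j+1"] unfolding k_def by linarith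
    then have "(fps_X::rat fps) ^ nat (ee j) * fps_X ^ nat (k+1) = fps_X ^ (L+2) * fps_X ^ nat (ee (j+1))"
      by (simp add: power_add[symmetric])
    then show ?thesis unfolding F_def nn k_def by (simp add: mult.assoc[symmetric] add.assoc)
  next
    case False
    then show ?thesis unfolding F_def nn k_def by (simp add: qb_out add.assoc)
  qed
  have t2: "fps_X ^ nat (ee j) * ((1 + fps_X ^ (n+1)) * qb (int n) k) = (1 + fps_X^(2*L+2)) * F L j"
    unfolding F_def n_def k_def by (simp add: algebra_simps)
  have t3: "fps_X ^ nat (ee j) * (fps_X ^ nat (int n + 1 - k) * qb (int n) (k-1)) = fps_X ^ L * F L (j-1)"
  proof (cases "0 \<le> int n + 1 - k")
    case True
    have "nat (ee j) + nat (int n + 1 - k) = L + nat (ee (j-1))"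
      using True ee_succ[of "j-1"] ee_nonneg[of j] ee_nonneg[of "j-1"] unfolding k_def nn by simp
    then have "(fps_X::rat fps) ^ nat (ee j) * fps_X ^ nat (int n + 1 - k) = fps_X ^ L * fps_X ^ nat (ee (j-1))"
      by (simp add: power_add[symmetric])
    then show ?thesis unfolding F_def nn k_def by (simp add: mult.assoc[symmetric] add_diff_eq)
  next
    case False
    then show ?thesis unfolding F_def nn k_def by (simp add: qb_out add_diff_eq)
  qed
  show ?thesis unfolding lhs D using t1 t2 t3 by (simp add: distrib_left)
qed

definition G :: "nat \<Rightarrow> (int \<Rightarrow> int) \<Rightarrow> rat fps" where
  "G L w = (\<Sum>j\<in>{- int L .. int L + 1}. of_int (w j) * F L j)"

lemma G_range:
  assumes "a \<le> - int L" "int L + 1 \<le> b"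
  shows "(\<Sum>j\<in>{a..b}. of_int (w j) * F L j) = G L w"
  unfolding G_def
  by (rule sum.mono_neutral_right) (use assms in \<open>auto simp: F_zero\<close>)

lemma shift_sum:
  "(\<Sum>j\<in>{a..b::int}. g (j + c)) = (\<Sum>j\<in>{a+c..b+c}. g j)"
proof -
  have "(\<Sum>j\<in>{a+c..b+c}. g j) = (\<Sum>j\<in>(\<lambda>j. j + c) ` {a..b}. g j)" by simp
  also have "\<dots> = (\<Sum>j\<in>{a..b}. g (j + c))"
    by (subst sum.reindex) (auto simp: inj_on_def)
  finally show ?thesis by simp
qed

lemma G_rec: "G (Suc L) w = fps_X ^ (L+2) * G L (\<lambda>j. w (j-1)) + (1 + fps_X^(2*L+2)) * G L w
   + fps_X ^ L * G L (\<lambda>j. w (j+1))"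
proof -
  define A where "A = {- int L - 1 .. int L + 2}"
  have e: "- int (Suc L) = - int L - 1" "int (Suc L) + 1 = int L + 2" by simp_all
  have "G (Suc L) w = (\<Sum>j\<in>A. of_int (w j) * F (Suc L) j)"
    unfolding G_def A_def e ..
  also have "\<dots> = fps_X ^ (L+2) * (\<Sum>j\<in>A. of_int (w j) * F L (j+1))
      + (1 + fps_X^(2*L+2)) * (\<Sum>j\<in>A. of_int (w j) * F L j)
      + fps_X ^ L * (\<Sum>j\<in>A. of_int (w j) * F L (j-1))"
    unfolding F_rec by (simp add: sum.distrib sum_distrib_left algebra_simps)
  also have "(\<Sum>j\<in>A. of_int (w j) * F L (j+1)) = G L (\<lambda>j. w (j-1))"
  proof -
    have "(\<Sum>j\<in>A. of_int (w j) * F L (j+1)) = (\<Sum>j\<in>A. of_int (w (j + 1 - 1)) * F L (j+1))" by simp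
    also have "\<dots> = (\<Sum>j\<in>{- int L .. int L + 3}. of_int (w (j - 1)) * F L j)"
      unfolding A_def using shift_sum[where g="\<lambda>j. of_int (w (j - 1)) * F L j" and c=1 and a="- int L - 1" and b="int L + 2"] by (simp add: add.commute)
    also have "\<dots> = G L (\<lambda>j. w (j-1))" by (rule G_range) auto
    finally show ?thesis .
  qed
  also have "(\<Sum>j\<in>A. of_int (w j) * F L j) = G L w"
    unfolding A_def by (rule G_range) auto
  also have "(\<Sum>j\<in>A. of_int (w j) * F L (j-1)) = G L (\<lambda>j. w (j+1))"
  proof -
    have "(\<Sum>j\<in>A. of_int (w j) * F L (j-1)) = (\<Sum>j\<in>A. of_int (w (j + (-1) + 1)) * F L (j + (-1)))" by simp
    also have "\<dots> = (\<Sum>j\<in>{- int L - 2 .. int L + 1}. of_int (w (j + 1)) * F L j)"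
      unfolding A_def using shift_sum[where g="\<lambda>j. of_int (w (j + 1)) * F L j" and c="-1" and a="- int L - 1" and b="int L + 2"] by (simp add: add.commute)
    also have "\<dots> = G L (\<lambda>j. w (j+1))" by (rule G_range) auto
    finally show ?thesis .
  qed
  finally show ?thesis .
qed

definition chi :: "int \<Rightarrow> int" where
  "chi j = (if j mod 3 = 1 then 1 else if j mod 3 = 2 then -1 else 0)"

lemma chi_m2: "chi (j - 1 - 1) = chi (j + 1)"
  unfolding chi_def by (simp split: if_splits; presburger)

lemma chi_sum: "chi (j + 1) = - chi j - chi (j - 1)"
  unfolding chi_def by (simp split: if_splits; presburger)

lemma G_lin: "G L (\<lambda>j. - a j - b j) = - G L a - G L b"
  unfolding G_def by (simp add: sum_subtractf sum_negf algebra_simps)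

lemma G_cong: "(\<And>j. w j = v j) \<Longrightarrow> G L w = G L v"
  by (simp add: G_def)

lemma G0: "G 0 w = of_int (w 0) * fps_X + of_int (w 1)"
proof -
  have s: "{- int 0 .. int 0 + 1} = {0, 1::int}" by auto
  have "F 0 0 = fps_X" unfolding F_def ee_def using qb_n0[of 1] by simp
  moreover have "F 0 1 = 1" unfolding F_def ee_def using qb_nn[of 1] by simp
  ultimately show ?thesis unfolding G_def s by simp
qed

definition P :: "nat \<Rightarrow> rat fps" where
  "P L = (\<Prod>k<L. 1 - fps_X ^ k + fps_X ^ (2*k))"

lemma idX: "(x::'a::comm_ring_1)^2*Q*(p*(1-Q-x*Q)) + (1+x^2*Q^2)*(Q*p*(1+x-x*Q))
   + Q*(-(Q*p*(1+x-x*Q)) - p*(1-Q-x*Q)) = x*Q*(p*(1-Q+Q^2))*(1+x-x^2*Q)"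
  by (simp add: algebra_simps power2_eq_square)

lemma idY: "(x::'a::comm_ring_1)^2*Q*(-(Q*p*(1+x-x*Q)) - p*(1-Q-x*Q)) + (1+x^2*Q^2)*(p*(1-Q-x*Q))
   + Q*(Q*p*(1+x-x*Q)) = p*(1-Q+Q^2)*(1-x*Q-x^2*Q)"
  by (simp add: algebra_simps power2_eq_square)

lemma main:
  "G L chi = fps_X ^ L * P L * (1 + fps_X - fps_X ^ (L+1)) \<and>
   G L (\<lambda>j. chi (j - 1)) = P L * (1 - fps_X ^ L - fps_X ^ (L+1))"
proof (induction L)
  case 0
  show ?case by (simp add: G0 P_def chi_def)
next
  case (Suc L)
  define x :: "rat fps" where "x = fps_X"
  define Q where "Q = x ^ L"
  define p where "p = P L"
  have X: "G L chi = Q * p * (1 + x - x * Q)" using Suc.IH unfolding Q_def p_def x_def by simp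
  have Y: "G L (\<lambda>j. chi (j - 1)) = p * (1 - Q - x * Q)" using Suc.IH unfolding Q_def p_def x_def by simp
  have Z: "G L (\<lambda>j. chi (j + 1)) = - (Q * p * (1 + x - x * Q)) - p * (1 - Q - x * Q)"
  proof -
    have "G L (\<lambda>j. chi (j + 1)) = G L (\<lambda>j. - chi j - chi (j - 1))" by (rule G_cong) (rule chi_sum)
    then show ?thesis using X Y G_lin by simp
  qed
  have Z2: "G L (\<lambda>j. chi (j - 1 - 1)) = - (Q * p * (1 + x - x * Q)) - p * (1 - Q - x * Q)"
  proof -
    have "G L (\<lambda>j. chi (j - 1 - 1)) = G L (\<lambda>j. chi (j + 1))" by (rule G_cong) (rule chi_m2)
    then show ?thesis using Z by simp
  qed
  have X2: "G L (\<lambda>j. chi (j + 1 - 1)) = Q * p * (1 + x - x * Q)" using X by simp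
  have pw: "fps_X ^ (L+2) = x^2 * Q" "fps_X^(2*L+2) = x^2*Q^2" "fps_X ^ L = Q"
    "fps_X ^ Suc L = x * Q" "fps_X ^ (Suc L + 1) = x^2 * Q" "fps_X ^ (2*L) = Q^2"
    unfolding Q_def x_def by (simp_all add: power_add power_mult_distrib power_mult mult_ac power2_eq_square)
  have PS: "P (Suc L) = p * (1 - Q + Q^2)"
    unfolding P_def p_def Q_def x_def by (simp add: power_mult[symmetric] mult_ac)
  have A: "G (Suc L) chi = fps_X ^ Suc L * P (Suc L) * (1 + fps_X - fps_X ^ (Suc L + 1))"
    unfolding G_rec pw PS X Y Z using idX[of x Q p] by (simp add: x_def)
  have B: "G (Suc L) (\<lambda>j. chi (j - 1)) = P (Suc L) * (1 - fps_X ^ Suc L - fps_X ^ (Suc L + 1))"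
    unfolding G_rec pw PS X2 Y Z2 using idY[of x Q p] by (simp add: x_def)
  show ?case using A B by simp
qed

lemma legendre3: "Legendre j 3 = chi j"
proof -
  have sq: "y^2 mod 3 \<noteq> (2::int)" for y :: int
  proof -
    have "y^2 mod 3 = (y mod 3)^2 mod 3" by (simp add: power_mod)
    moreover have "y mod 3 = 0 \<or> y mod 3 = 1 \<or> y mod 3 = 2" by presburger
    ultimately show ?thesis by auto
  qed
  have "j mod 3 = 0 \<or> j mod 3 = 1 \<or> j mod 3 = 2" by presburger
  then consider "j mod 3 = 0" | "j mod 3 = 1" | "j mod 3 = 2" by blast
  then show ?thesis
  proof cases
    case 1 then show ?thesis by (simp add: Legendre_def chi_def cong_def)
  next
    case 2
    have "QuadRes 3 j" unfolding QuadRes_def cong_def using 2 by (intro exI[of _ 1]) simp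
    then show ?thesis using 2 by (simp add: Legendre_def chi_def cong_def)
  next
    case 3
    have "\<not> QuadRes 3 j" unfolding QuadRes_def cong_def using 3 sq by simp
    then show ?thesis using 3 by (simp add: Legendre_def chi_def cong_def)
  qed
qed

lemma qpm_nz: "(qpoch (-1) fps_X L :: rat fps) \<noteq> 0"
proof (induction L)
  case 0 then show ?case by (simp add: qp0)
next
  case (Suc L)
  have "(1 + fps_X ^ L :: rat fps) $ 0 \<noteq> 0" by (cases L) simp_all
  then have "(1 + fps_X ^ L :: rat fps) \<noteq> 0" by (metis fps_zero_nth)
  then show ?case using Suc.IH by (simp add: qpoch_Suc)
qed

lemma qpm3: "(qpoch (-1) (fps_X ^ 3) L :: rat fps) = P L * qpoch (-1) fps_X L"
proof (induction L)
  case 0 then show ?case by (simp add: qp0 P_def)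
next
  case (Suc L)
  have "(1 + (fps_X ^ 3) ^ L :: rat fps) = (1 - fps_X ^ L + fps_X ^ (2*L)) * (1 + fps_X ^ L)"
    by (simp add: algebra_simps power_mult[symmetric] power_add[symmetric] mult_2)
  then show ?case using Suc.IH by (simp add: qpoch_Suc P_def mult_ac)
qed

theorem theorem2p2:
  fixes L :: nat
  shows "(\<Sum>j\<in>{- int L .. int L + 1}.
            fps_X ^ nat ((j - 1) * (j - 2) div 2) * of_int (Legendre j 3)
              * qbinom fps_X (2 * int L + 1) (int L + j))
         = (fps_X ^ L * (qpoch (-1) (fps_X ^ 3) L / qpoch (-1) fps_X L)
              * (1 + fps_X - fps_X ^ (L + 1)) :: rat fps)"
proof -
  have "(\<Sum>j\<in>{- int L .. int L + 1}.
            fps_X ^ nat ((j - 1) * (j - 2) div 2) * of_int (Legendre j 3)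
              * qbinom fps_X (2 * int L + 1) (int L + j)) = (G L chi :: rat fps)"
    unfolding G_def F_def ee_def legendre3 by (simp add: mult_ac)
  also have "\<dots> = fps_X ^ L * P L * (1 + fps_X - fps_X ^ (L+1))" using main by blast
  also have "P L = qpoch (-1) (fps_X ^ 3) L / qpoch (-1) fps_X L"
    unfolding qpm3 using qpm_nz[of L] by (simp add: fps_divide_times_eq)
  finally show ?thesis by simp
qed

end
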